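(* There exists an absolute constant $C\ge1$ such that for every $n\ge1$ and every two complementary intervals $I,J$ of $F_n$ in $[0,1]$ that are separated by at most two adjacent complementary intervals of $F_n$, one has \[\frac{1}{Cn}\le\frac{|I|}{|J|}\le Cn,\] where $|\cdot|$ denotes Euclidean length.
   Context: Define finite subsets $F_n\subset[0,1]$ of rationals: $F_0=\{0/1,1/1\}$, and $F_n$ is obtained from $F_{n-1}$ by inserting, between each pair of consecutive elements $p/q<r/s$ (in lowest terms), the mediant $(p+r)/(q+s)$. The complementary intervals of $F_n$ are the open intervals between consecutive elements of $F_n$. "Separated by at most two adjacent complementary intervals" means that between $I$ and $J$ there are zero, one, or two complementary intervals of $F_n$. *)

theory Defs
  imports Complex_Main
begin

definition mediant :: "rat \<Rightarrow> rat \<Rightarrow> rat" where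
  "mediant a b = (case quotient_of a of (p, q) \<Rightarrow>
                   (case quotient_of b of (r, s) \<Rightarrow> Fract (p + r) (q + s)))"

fun insert_mediants :: "rat list \<Rightarrow> rat list" where
  "insert_mediants (a # b # xs) = a # mediant a b # insert_mediants (b # xs)"
| "insert_mediants xs = xs"

text \<open>F n, as the increasingly sorted list of its elements.\<close>
fun F :: "nat \<Rightarrow> rat list" where
  "F 0 = [0, 1]"
| "F (Suc n) = insert_mediants (F n)"

text \<open>The complementary intervals of F n are indexed by i < length (F n) - 1; the i-th one is
  the open interval between F n ! i and F n ! (i+1).  Its Euclidean length:\<close>
definition cint_len :: "nat \<Rightarrow> nat \<Rightarrow> real" where
  "cint_len n i = real_of_rat (F n ! Suc i - F n ! i)"

end

theory Submission
  imports Defs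
begin

fun ins :: "(int \<times> int) list \<Rightarrow> (int \<times> int) list" where
  "ins ((p,q)#(r,s)#xs) = (p,q) # (p+r,q+s) # ins ((r,s)#xs)"
| "ins xs = xs"

fun G :: "nat \<Rightarrow> (int \<times> int) list" where
  "G 0 = [(0,1),(1,1)]"
| "G (Suc n) = ins (G n)"

fun good :: "(int \<times> int) list \<Rightarrow> bool" where
  "good ((p,q)#(r,s)#xs) = (0<q \<and> q*r - p*s = 1 \<and> good ((r,s)#xs))"
| "good [(p,q)] = (0<q)"
| "good [] = True"

lemma ins_hd: "\<exists>rest. ins (x#xs) = x # rest"
proof (cases xs)
  case Nil then show ?thesis by (cases x) auto
next
  case (Cons y ys) then show ?thesis by (cases x; cases y) auto
qed

lemma good_hd: "good (x#xs) \<Longrightarrow> 0 < snd x"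
  by (cases x; cases xs) auto

lemma good_ins: "good L \<Longrightarrow> good (ins L)"
proof (induction L rule: ins.induct)
  case (1 p q r s xs)
  obtain rest where r: "ins ((r,s)#xs) = (r,s) # rest" using ins_hd by blast
  from 1 have g: "good ((r,s)#xs)" "0<q" "q*r - p*s = 1" by auto
  have s: "0 < s" using good_hd[OF g(1)] by simp
  have "good ((r,s)#rest)" using 1(1)[OF g(1)] r by simp
  then show ?case using g s r by (simp add: algebra_simps)
qed auto

lemma unimod_coprime: "q*r - p*s = (1::int) \<Longrightarrow> coprime p q \<and> coprime r s"
proof -
  assume h: "q*r - p*s = 1"
  have "coprime p q"
  proof (rule coprimeI)
    fix c assume "c dvd p" "c dvd q"
    then have "c dvd q*r - p*s" by auto
    then show "is_unit c" using h by simp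
  qed
  moreover have "coprime r s"
  proof (rule coprimeI)
    fix c assume "c dvd r" "c dvd s"
    then have "c dvd q*r - p*s" by auto
    then show "is_unit c" using h by simp
  qed
  ultimately show ?thesis by blast
qed

lemma quot_Fract: "coprime p q \<Longrightarrow> 0 < q \<Longrightarrow> quotient_of (Fract p q) = (p, q)"
  by (simp add: quotient_of_Fract normalize_def)

definition fr :: "int \<times> int \<Rightarrow> rat" where "fr x = Fract (fst x) (snd x)"

lemma map_ins: "good L \<Longrightarrow> insert_mediants (map fr L) = map fr (ins L)"
proof (induction L rule: ins.induct)
  case (1 p q r s xs)
  from 1 have g: "good ((r,s)#xs)" "0<q" "q*r - p*s = 1" by auto
  have s: "0 < s" using good_hd[OF g(1)] by simp
  have c: "coprime p q" "coprime r s" using unimod_coprime[OF g(3)] by auto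
  have "mediant (fr (p,q)) (fr (r,s)) = fr (p+r, q+s)"
    using c g(2) s by (simp add: fr_def mediant_def quot_Fract)
  then show ?case using 1(1)[OF g(1)] by (simp add: fr_def)
next
  case ("2_1") then show ?case by simp
next
  case ("2_2" v) then show ?case by simp
qed

lemma F_G: "F n = map fr (G n) \<and> good (G n)"
proof (induction n)
  case 0 then show ?case by (simp add: fr_def rat_number_collapse)
next
  case (Suc n) then show ?case by (simp add: map_ins good_ins)
qed

lemma good_nth: "good L \<Longrightarrow> Suc i < length L \<Longrightarrow>
   snd (L!i) * fst (L!Suc i) - fst (L!i) * snd (L!Suc i) = 1 \<and> 0 < snd (L!i) \<and> 0 < snd (L!Suc i)"
proof (induction L arbitrary: i rule: good.induct)
  case (1 p q r s xs)
  show ?case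
  proof (cases i)
    case 0 then show ?thesis using 1 good_hd[of "(r,s)" xs] by auto
  next
    case (Suc k) then show ?thesis using 1 by auto
  qed
qed auto

lemma good_pos: "good L \<Longrightarrow> i < length L \<Longrightarrow> 0 < snd (L!i)"
proof (induction L arbitrary: i rule: good.induct)
  case (1 p q r s xs)
  then show ?case by (cases i) auto
qed auto

lemma length_ins: "length (ins L) = 2 * length L - 1"
  by (induction L rule: ins.induct) auto

lemma nth_ins: "(k < length L \<longrightarrow> ins L ! (2*k) = L ! k) \<and>
   (Suc k < length L \<longrightarrow> ins L ! (2*k+1) = (fst (L!k) + fst (L!Suc k), snd (L!k) + snd (L!Suc k)))"
proof (induction L arbitrary: k rule: ins.induct)
  case (1 p q r s xs)
  show ?case
  proof (cases k)
    case 0 then show ?thesis by simp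
  next
    case (Suc m)
    have "ins ((p,q)#(r,s)#xs) ! (2*k) = ins ((r,s)#xs) ! (2*m)" using Suc by simp
    moreover have "ins ((p,q)#(r,s)#xs) ! (2*k+1) = ins ((r,s)#xs) ! (2*m+1)" using Suc by simp
    ultimately show ?thesis using 1[of m] Suc by simp
  qed
next
  case ("2_1") then show ?case by simp
next
  case ("2_2" v) then show ?case by (cases k) auto
qed

lemma len_G: "length (G n) = 2^n + 1"
  by (induction n) (auto simp: length_ins)

definition dd :: "nat \<Rightarrow> nat \<Rightarrow> int" where "dd n k = snd (G n ! k)"

lemma dd_even: "k < length (G n) \<Longrightarrow> dd (Suc n) (2*k) = dd n k"
  using nth_ins[of k "G n"] by (simp add: dd_def)

lemma dd_odd: "Suc k < length (G n) \<Longrightarrow> dd (Suc n) (2*k+1) = dd n k + dd n (Suc k)"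
  using nth_ins[of k "G n"] by (simp add: dd_def)

lemma dd_pos: "k < length (G n) \<Longrightarrow> 0 < dd n k"
  using good_pos F_G by (simp add: dd_def)

lemma cint_len_dd: "Suc i < length (F n) \<Longrightarrow> cint_len n i = 1 / (of_int (dd n i) * of_int (dd n (Suc i)))"
proof -
  assume h: "Suc i < length (F n)"
  have F: "F n = map fr (G n)" "good (G n)" using F_G by auto
  have h2: "Suc i < length (G n)" using h F by simp
  obtain p q r s where pq: "G n ! i = (p,q)" "G n ! Suc i = (r,s)" by (metis surj_pair)
  from good_nth[OF F(2) h2] pq have e: "q*r - p*s = 1" "0<q" "0<s" by auto
  have "F n ! Suc i - F n ! i = Fract r s - Fract p q" using F h2 pq by (simp add: fr_def)
  also have "\<dots> = Fract (q*r - p*s) (s*q)" using e by (simp add: algebra_simps)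
  also have "\<dots> = Fract 1 (s*q)" using e by simp
  finally have "F n ! Suc i - F n ! i = of_int 1 / of_int (s*q)" by (simp add: Fract_of_int_quotient)
  then show ?thesis using pq by (simp add: cint_len_def dd_def of_rat_divide of_rat_mult mult.commute)
qed


lemma par: "\<exists>l. k = 2*l \<or> k = 2*l+(1::nat)" by presburger

lemma lenS: "length (G (Suc n)) = 2 * length (G n) - 1"
  by (simp add: length_ins)

lemma dd_R: "Suc k < length (G n) \<Longrightarrow> dd n k \<le> (int n+1) * dd n (Suc k) \<and> dd n (Suc k) \<le> (int n+1) * dd n k"
proof (induction n arbitrary: k)
  case 0 then show ?case by (simp add: dd_def less_Suc_eq)
next
  case (Suc n)
  obtain l where "k = 2*l \<or> k = 2*l+1" using par by blast
  then show ?case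
  proof
    assume k: "k = 2*l"
    have l: "Suc l < length (G n)" using Suc.prems k lenS[of n] by simp
    have e: "dd (Suc n) k = dd n l" "dd (Suc n) (Suc k) = dd n l + dd n (Suc l)"
      using dd_even[of l n] dd_odd[of l n] l k by auto
    have p: "0 < dd n l" "0 < dd n (Suc l)" using dd_pos l by auto
    have "dd n (Suc l) \<le> (int n+1) * dd n l" using Suc.IH[OF l] by simp
    then show ?thesis using e p by (simp add: algebra_simps)
  next
    assume k: "k = 2*l+1"
    have l: "Suc l < length (G n)" using Suc.prems k lenS[of n] by simp
    have e: "dd (Suc n) (Suc k) = dd n (Suc l)" "dd (Suc n) k = dd n l + dd n (Suc l)"
      using dd_even[of "Suc l" n] dd_odd[of l n] l k by auto
    have p: "0 < dd n l" "0 < dd n (Suc l)" using dd_pos l by auto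
    have "dd n l \<le> (int n+1) * dd n (Suc l)" using Suc.IH[of l] l by simp
    then show ?thesis using e p by (simp add: algebra_simps)
  qed
qed

lemma dd_Q: "0 < k \<Longrightarrow> Suc k < length (G n) \<Longrightarrow>
   dd n (k-1) \<le> dd n k + 2 * dd n (Suc k) \<and> dd n (Suc k) \<le> dd n k + 2 * dd n (k-1)"
proof (induction n arbitrary: k)
  case 0 then show ?case by simp
next
  case (Suc n)
  obtain l where "k = 2*l \<or> k = 2*l+1" using par by blast
  then show ?case
  proof
    assume k: "k = 2*l"
    have l: "Suc l < length (G n)" "0 < l" using Suc.prems k lenS[of n] by auto
    have km: "k - 1 = 2*(l-1)+1" using k l by simp
    have e: "dd (Suc n) k = dd n l" "dd (Suc n) (Suc k) = dd n l + dd n (Suc l)"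
      "dd (Suc n) (k-1) = dd n (l-1) + dd n l"
      using dd_even[of l n] dd_odd[of l n] dd_odd[of "l-1" n] l k km by auto
    have p: "0 < dd n l" "0 < dd n (Suc l)" "0 < dd n (l-1)" using dd_pos l by auto
    have "dd n (l-1) \<le> dd n l + 2 * dd n (Suc l) \<and> dd n (Suc l) \<le> dd n l + 2 * dd n (l-1)"
      using Suc.IH[OF l(2) l(1)] .
    then show ?thesis using e p by (simp add: algebra_simps)
  next
    assume k: "k = 2*l+1"
    have l: "Suc l < length (G n)" using Suc.prems k lenS[of n] by simp
    have e: "dd (Suc n) (Suc k) = dd n (Suc l)" "dd (Suc n) k = dd n l + dd n (Suc l)"
       "dd (Suc n) (k-1) = dd n l"
      using dd_even[of "Suc l" n] dd_odd[of l n] dd_even[of l n] l k by auto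
    have p: "0 < dd n l" "0 < dd n (Suc l)" using dd_pos l by auto
    then show ?thesis using e p by (simp add: algebra_simps)
  qed
qed

lemma dd_B: "k = 2*l+1 \<Longrightarrow> Suc (Suc k) < length (G (Suc m)) \<Longrightarrow>
   dd (Suc m) k \<le> 2 * dd (Suc m) (k+2) \<and> dd (Suc m) (k+2) \<le> 2 * dd (Suc m) k"
proof -
  assume k: "k = 2*l+1" and h: "Suc (Suc k) < length (G (Suc m))"
  have l: "Suc (Suc l) < length (G m)" using h k lenS[of m] by simp
  have e: "dd (Suc m) k = dd m l + dd m (Suc l)" "dd (Suc m) (k+2) = dd m (Suc l) + dd m (Suc (Suc l))"
    using dd_odd[of l m] dd_odd[of "Suc l" m] l k by (auto simp: algebra_simps)
  have p: "0 < dd m l" "0 < dd m (Suc l)" "0 < dd m (Suc (Suc l))" using dd_pos l by auto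
  have "dd m l \<le> dd m (Suc l) + 2 * dd m (Suc (Suc l)) \<and> dd m (Suc (Suc l)) \<le> dd m (Suc l) + 2 * dd m l"
    using dd_Q[of "Suc l" m] l by simp
  then show ?thesis using e p by simp
qed

lemma dd_C: "k = 2*l \<Longrightarrow> Suc (Suc k) < length (G (Suc m)) \<Longrightarrow>
   dd (Suc m) k \<le> (int m + 2) * dd (Suc m) (k+2) \<and> dd (Suc m) (k+2) \<le> (int m + 2) * dd (Suc m) k
   \<and> dd (Suc m) k \<le> dd (Suc m) (Suc k) \<and> dd (Suc m) (k+2) \<le> dd (Suc m) (Suc k)"
proof -
  assume k: "k = 2*l" and h: "Suc (Suc k) < length (G (Suc m))"
  have l: "Suc l < length (G m)" using h k lenS[of m] by simp
  have e: "dd (Suc m) k = dd m l" "dd (Suc m) (Suc k) = dd m l + dd m (Suc l)"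
     "dd (Suc m) (k+2) = dd m (Suc l)"
    using dd_odd[of l m] dd_even[of l m] dd_even[of "Suc l" m] l k by (auto simp: algebra_simps)
  have p: "0 < dd m l" "0 < dd m (Suc l)" using dd_pos l by auto
  have "dd m l \<le> (int m+1) * dd m (Suc l) \<and> dd m (Suc l) \<le> (int m+1) * dd m l"
    using dd_R[OF l] .
  then show ?thesis using e p by (simp add: algebra_simps)
qed

lemma weak: "a \<le> c*x \<Longrightarrow> c \<le> c' \<Longrightarrow> 0 \<le> x \<Longrightarrow> a \<le> c'*(x::int)"
  by (meson mult_right_mono order_trans)

lemma dd_A: "Suc (Suc k) < length (G n) \<Longrightarrow>
   dd n k \<le> (int n + 2) * dd n (k+2) \<and> dd n (k+2) \<le> (int n + 2) * dd n k"
proof (cases n)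
  case 0 then show "Suc (Suc k) < length (G n) \<Longrightarrow> ?thesis" by simp
next
  case (Suc m)
  assume h: "Suc (Suc k) < length (G n)"
  have p: "0 < dd n k" "0 < dd n (k+2)" using dd_pos h by auto
  obtain l where "k = 2*l \<or> k = 2*l+1" using par by blast
  then show ?thesis
  proof
    assume "k = 2*l" then have "dd n k \<le> (int m + 2) * dd n (k+2) \<and> dd n (k+2) \<le> (int m + 2) * dd n k"
      using dd_C[of k l m] h Suc by auto
    then show ?thesis using weak[of _ "int m + 2" _ "int n + 2"] p Suc by auto
  next
    assume k: "k = 2*l+1"
    then have "dd n k \<le> 2 * dd n (k+2) \<and> dd n (k+2) \<le> 2 * dd n k"
      using dd_B[OF k, of m] h Suc by auto
    then show ?thesis using weak[of _ "2" _ "int n + 2"] p Suc by auto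
  qed
qed

lemma dd_D: "k = 2*l \<Longrightarrow> k + 4 < length (G (Suc m)) \<Longrightarrow>
   dd (Suc m) k \<le> (int m + 2) * dd (Suc m) (k+4) \<and> dd (Suc m) (k+4) \<le> (int m + 2) * dd (Suc m) k"
proof -
  assume k: "k = 2*l" and h: "k + 4 < length (G (Suc m))"
  have l: "Suc (Suc l) < length (G m)" using h k lenS[of m] by simp
  have k4: "k + 4 = 2*(l+2)" using k by simp
  have e: "dd (Suc m) k = dd m l" "dd (Suc m) (k+4) = dd m (l+2)"
    using dd_even[of l m] dd_even[of "l+2" m] l k unfolding k4 by auto
  show ?thesis using dd_A[OF l] e by simp
qed


lemma fin: "0<a \<Longrightarrow> 0<b \<Longrightarrow> 0<x \<Longrightarrow> 0<y \<Longrightarrow> 0 \<le> c \<Longrightarrow> 0 \<le> d \<Longrightarrow> a \<le> c*x \<Longrightarrow> b \<le> d*y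
  \<Longrightarrow> x \<le> c*a \<Longrightarrow> y \<le> d*b \<Longrightarrow> c*d \<le> K \<Longrightarrow> a*b \<le> K*(x*y) \<and> x*y \<le> K*((a::int)*b)"
proof -
  assume h: "0<a" "0<b" "0<x" "0<y" "0 \<le> c" "0 \<le> d" "a \<le> c*x" "b \<le> d*y" "x \<le> c*a" "y \<le> d*b" "c*d \<le> K"
  have "a*b \<le> (c*x)*(d*y)" using h by (intro mult_mono) auto
  also have "\<dots> = (c*d)*(x*y)" by (simp add: ac_simps)
  also have "\<dots> \<le> K*(x*y)" using h by (intro mult_right_mono) auto
  finally have 1: "a*b \<le> K*(x*y)" .
  have "x*y \<le> (c*a)*(d*b)" using h by (intro mult_mono) auto
  also have "\<dots> = (c*d)*(a*b)" by (simp add: ac_simps)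
  also have "\<dots> \<le> K*(a*b)" using h by (intro mult_right_mono) auto
  finally show ?thesis using 1 by simp
qed

lemma window: "Suc j < length (G (Suc m)) \<Longrightarrow> i < j \<Longrightarrow> j \<le> i + 3 \<Longrightarrow>
  dd (Suc m) i * dd (Suc m) (Suc i) \<le> 8 * int (Suc m) * (dd (Suc m) j * dd (Suc m) (Suc j)) \<and>
  dd (Suc m) j * dd (Suc m) (Suc j) \<le> 8 * int (Suc m) * (dd (Suc m) i * dd (Suc m) (Suc i))"
proof -
  assume h: "Suc j < length (G (Suc m))" "i < j" "j \<le> i + 3"
  define e where "e = dd (Suc m)"
  define K where "K = 8 * int (Suc m)"
  have pos: "\<And>t. t \<le> Suc j \<Longrightarrow> 0 < e t" unfolding e_def using dd_pos h(1) by force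
  have "j = i+1 \<or> j = i+2 \<or> j = i+3" using h by arith
  moreover obtain l where "i = 2*l \<or> i = 2*l+1" using par by blast
  ultimately consider "j = i+1" | "j = i+2" "i = 2*l" | "j = i+2" "i = 2*l+1"
     | "j = i+3" "i = 2*l" | "j = i+3" "i = 2*l+1" by blast
  then have "e i * e (Suc i) \<le> K * (e j * e (Suc j)) \<and> e j * e (Suc j) \<le> K * (e i * e (Suc i))"
  proof cases
    case 1
    have A: "e i \<le> (int (Suc m) + 2) * e (i+2) \<and> e (i+2) \<le> (int (Suc m) + 2) * e i"
      using dd_A[of i "Suc m"] h 1 unfolding e_def by simp
    have "e i * e (Suc i) \<le> K * (e (i+2) * e (Suc i)) \<and> e (i+2) * e (Suc i) \<le> K * (e i * e (Suc i))"
      by (rule fin[where c="int (Suc m) + 2" and d=1]) (use A pos h 1 in \<open>auto simp: K_def\<close>)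
    then show ?thesis using 1 by (simp add: ac_simps)
  next
    case 2
    have C: "e i \<le> (int m + 2) * e (i+2) \<and> e (i+2) \<le> (int m + 2) * e i"
      using dd_C[of i l m] h 2 unfolding e_def by simp
    have B: "e (i+1) \<le> 2 * e (i+3) \<and> e (i+3) \<le> 2 * e (i+1)"
      using dd_B[of "i+1" l m] h 2 unfolding e_def by (simp add: numeral_eq_Suc)
    have "e i * e (Suc i) \<le> K * (e (i+2) * e (i+3)) \<and> e (i+2) * e (i+3) \<le> K * (e i * e (Suc i))"
      by (rule fin[where c="int m + 2" and d=2]) (use B C pos h 2 in \<open>auto simp: K_def\<close>)
    then show ?thesis using 2 by (simp add: ac_simps numeral_eq_Suc)
  next
    case 3
    have B: "e i \<le> 2 * e (i+2) \<and> e (i+2) \<le> 2 * e i"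
      using dd_B[of i l m] h 3 unfolding e_def by simp
    have C: "e (i+1) \<le> (int m + 2) * e (i+3) \<and> e (i+3) \<le> (int m + 2) * e (i+1)"
      using dd_C[of "i+1" "l+1" m] h 3 unfolding e_def by (simp add: numeral_eq_Suc)
    have "e i * e (Suc i) \<le> K * (e (i+2) * e (i+3)) \<and> e (i+2) * e (i+3) \<le> K * (e i * e (Suc i))"
      by (rule fin[where c=2 and d="int m + 2"]) (use B C pos h 3 in \<open>auto simp: K_def\<close>)
    then show ?thesis using 3 by (simp add: ac_simps numeral_eq_Suc)
  next
    case 4
    have D: "e i \<le> (int m + 2) * e (i+4) \<and> e (i+4) \<le> (int m + 2) * e i"
      using dd_D[of i l m] h 4 unfolding e_def by simp
    have B: "e (i+1) \<le> 2 * e (i+3) \<and> e (i+3) \<le> 2 * e (i+1)"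
      using dd_B[of "i+1" l m] h 4 unfolding e_def by (simp add: numeral_eq_Suc)
    have "e i * e (Suc i) \<le> K * (e (i+4) * e (i+3)) \<and> e (i+4) * e (i+3) \<le> K * (e i * e (Suc i))"
      by (rule fin[where c="int m + 2" and d=2]) (use B D pos h 4 in \<open>auto simp: K_def\<close>)
    then show ?thesis using 4 by (simp add: ac_simps numeral_eq_Suc)
  next
    case 5
    have B1: "e i \<le> 2 * e (i+2) \<and> e (i+2) \<le> 2 * e i"
      using dd_B[of i l m] h 5 unfolding e_def by simp
    have B2: "e (i+2) \<le> 2 * e (i+4) \<and> e (i+4) \<le> 2 * e (i+2)"
      using dd_B[of "i+2" "l+1" m] h 5 unfolding e_def by (simp add: numeral_eq_Suc)
    have C: "e (i+1) \<le> (int m + 2) * e (i+3) \<and> e (i+3) \<le> (int m + 2) * e (i+1)"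
      using dd_C[of "i+1" "l+1" m] h 5 unfolding e_def by (simp add: numeral_eq_Suc)
    have "e i * e (Suc i) \<le> K * (e (i+4) * e (i+3)) \<and> e (i+4) * e (i+3) \<le> K * (e i * e (Suc i))"
      by (rule fin[where c=4 and d="int m + 2"]) (use B1 B2 C pos h 5 in \<open>auto simp: K_def\<close>)
    then show ?thesis using 5 by (simp add: ac_simps numeral_eq_Suc)
  qed
  then show ?thesis unfolding e_def K_def .
qed


lemma both: "Suc i < length (G n) \<Longrightarrow> Suc j < length (G n) \<Longrightarrow> i \<noteq> j \<Longrightarrow> i \<le> j + 3 \<Longrightarrow> j \<le> i + 3 \<Longrightarrow> 1 \<le> n \<Longrightarrow>
  dd n i * dd n (Suc i) \<le> 8 * int n * (dd n j * dd n (Suc j)) \<and>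
  dd n j * dd n (Suc j) \<le> 8 * int n * (dd n i * dd n (Suc i))"
proof -
  assume h: "Suc i < length (G n)" "Suc j < length (G n)" "i \<noteq> j" "i \<le> j + 3" "j \<le> i + 3" "1 \<le> n"
  obtain m where n: "n = Suc m" using h(6) by (cases n) auto
  show ?thesis
  proof (cases "i < j")
    case True then show ?thesis using window[of j m i] h n by auto
  next
    case False then have "j < i" using h by auto
    then show ?thesis using window[of i m j] h n by auto
  qed
qed

theorem proposition9p3:
  shows "\<exists>C::real. C \<ge> 1 \<and>
    (\<forall>n::nat. n \<ge> 1 \<longrightarrow>
      (\<forall>i j. i < length (F n) - 1 \<longrightarrow> j < length (F n) - 1 \<longrightarrow> i \<noteq> j \<longrightarrow>
         (i \<le> j + 3 \<and> j \<le> i + 3) \<longrightarrow>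
         1 / (C * real n) \<le> cint_len n i / cint_len n j \<and>
         cint_len n i / cint_len n j \<le> C * real n))"
proof (intro exI[of _ 8] conjI allI impI)
  fix n i j :: nat
  assume n: "1 \<le> n" and hi: "i < length (F n) - 1" and hj: "j < length (F n) - 1" and ne: "i \<noteq> j"
    and d: "i \<le> j + 3 \<and> j \<le> i + 3"
  have lF: "length (F n) = length (G n)" using F_G[of n] by simp
  have hi': "Suc i < length (G n)" "Suc j < length (G n)" using hi hj lF by auto
  define Pi where "Pi = real_of_int (dd n i * dd n (Suc i))"
  define Pj where "Pj = real_of_int (dd n j * dd n (Suc j))"
  have pp: "0 < Pi" "0 < Pj" unfolding Pi_def Pj_def using dd_pos hi' by auto
  have ci: "cint_len n i = 1 / Pi" "cint_len n j = 1 / Pj"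
    using cint_len_dd[of i n] cint_len_dd[of j n] hi hj unfolding Pi_def Pj_def by auto
  have B: "dd n i * dd n (Suc i) \<le> 8 * int n * (dd n j * dd n (Suc j)) \<and>
    dd n j * dd n (Suc j) \<le> 8 * int n * (dd n i * dd n (Suc i))"
    using both[OF hi' ne] d n by auto
  have C1: "real_of_int (dd n i * dd n (Suc i)) \<le> real_of_int (8 * int n * (dd n j * dd n (Suc j)))"
    and C2: "real_of_int (dd n j * dd n (Suc j)) \<le> real_of_int (8 * int n * (dd n i * dd n (Suc i)))"
    using B by (simp_all only: of_int_le_iff)
  have B1: "Pi \<le> 8 * real n * Pj" and B2: "Pj \<le> 8 * real n * Pi"
    using C1 C2 unfolding Pi_def Pj_def by simp_all
  have r: "cint_len n i / cint_len n j = Pj / Pi" unfolding ci using pp by simp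
  have np: "0 < real n" using n by simp
  show "1 / (8 * real n) \<le> cint_len n i / cint_len n j"
    unfolding r using B1 pp np by (simp add: field_simps)
  show "cint_len n i / cint_len n j \<le> 8 * real n"
    unfolding r using B2 pp np by (simp add: field_simps)
qed simp

end
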